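(* Assume that for every class $c\in[C]$ and every deterministic policy $u\in\mathcal U^c_D$, the matrix $\phi^{c,u}$ (as a Markov chain on $\mathcal S^c$) has exactly one recurrent communicating class. Then for every class $c$ and every (possibly randomized) policy $u\in\mathcal U^c$, the continuous-time Markov chain on $\mathcal S^c$ with generator $Q^{c,u}=\lambda^c(\phi^{c,u}-I)$ admits a unique stationary distribution $\eta^{c,u}\in\mathcal P(\mathcal S^c)$, and, from any initial state distribution, the distribution of the state at time $t$ of this chain (i.e., of a player of class $c$ using policy $u$) converges to $\eta^{c,u}$ as $t\to\infty$.
   Context: Class $c$ has a finite state set $\mathcal S^c$, nonempty finite admissible action sets $\mathcal A^c(s)$, $\mathcal A^c=\bigcup_s\mathcal A^c(s)$, a transition kernel $\phi^c(\cdot\mid s,a)\in\mathcal P(\mathcal S^c)$ and a rate $\lambda^c>0$. $\mathcal U^c$ is the set of maps $u:\mathcal S^c\to\mathcal P(\mathcal A^c)$ with $\mathrm{supp}(u(s))\subseteq\mathcal A^c(s)$; $\mathcal U^c_D\subset\mathcal U^c$ the deterministic ones (Dirac masses). For $u\in\mathcal U^c$, $\phi^{c,u}$ is the matrix with entries $\phi^{c,u}_{ss'}=\sum_{a'\in\mathcal A^c(s')}\phi^c(s\mid s',a')u(a'\mid s')$ (probability of moving from $s'$ to $s$); the chain with generator $Q^{c,u}$ jumps at rate $\lambda^c$ according to these probabilities. *)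

theory Defs
  imports "HOL-Analysis.Analysis"
begin

definition pdist :: "'s set \<Rightarrow> ('s \<Rightarrow> real) \<Rightarrow> bool" where
  "pdist S p \<longleftrightarrow> (\<forall>s\<in>S. 0 \<le> p s) \<and> (\<forall>s. s \<notin> S \<longrightarrow> p s = 0) \<and> sum p S = 1"

definition policy :: "'s set \<Rightarrow> ('s \<Rightarrow> 'a set) \<Rightarrow> ('s \<Rightarrow> 'a \<Rightarrow> real) \<Rightarrow> bool" where
  "policy S A u \<longleftrightarrow> (\<forall>s\<in>S. pdist (A s) (u s))"

definition det_policy :: "'s set \<Rightarrow> ('s \<Rightarrow> 'a set) \<Rightarrow> ('s \<Rightarrow> 'a \<Rightarrow> real) \<Rightarrow> bool" where
  "det_policy S A u \<longleftrightarrow> policy S A u \<and>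
     (\<forall>s\<in>S. \<exists>a\<in>A s. u s = (\<lambda>b. if b = a then 1 else 0))"

text \<open>Kernel convention: phi s' a s = phi(s | s', a).
  pol_matrix ... s s' = phi^{u}_{s s'} = probability of moving from s' to s.\<close>
definition pol_matrix :: "('s \<Rightarrow> 'a set) \<Rightarrow> ('s \<Rightarrow> 'a \<Rightarrow> 's \<Rightarrow> real) \<Rightarrow> ('s \<Rightarrow> 'a \<Rightarrow> real)
    \<Rightarrow> 's \<Rightarrow> 's \<Rightarrow> real" where
  "pol_matrix A phi u s s' = (\<Sum>a\<in>A s'. phi s' a s * u s' a)"

definition generator :: "real \<Rightarrow> ('s \<Rightarrow> 's \<Rightarrow> real) \<Rightarrow> 's \<Rightarrow> 's \<Rightarrow> real" where
  "generator lam P s s' = lam * (P s s' - (if s = s' then 1 else 0))"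

definition stationary :: "'s set \<Rightarrow> ('s \<Rightarrow> 's \<Rightarrow> real) \<Rightarrow> ('s \<Rightarrow> real) \<Rightarrow> bool" where
  "stationary S Q eta \<longleftrightarrow> pdist S eta \<and> (\<forall>s\<in>S. (\<Sum>s'\<in>S. Q s s' * eta s') = 0)"

definition mat_vec :: "'s set \<Rightarrow> ('s \<Rightarrow> 's \<Rightarrow> real) \<Rightarrow> ('s \<Rightarrow> real) \<Rightarrow> 's \<Rightarrow> real" where
  "mat_vec S P p = (\<lambda>s. if s \<in> S then (\<Sum>s'\<in>S. P s s' * p s') else 0)"

text \<open>Law at time t of the chain started from p0 that jumps at rate lam according to P
  (Poisson clock of rate lam; equals p0 multiplied by exp(t Q) with Q = lam (P - I)).\<close>
definition ctmc_dist :: "'s set \<Rightarrow> real \<Rightarrow> ('s \<Rightarrow> 's \<Rightarrow> real) \<Rightarrow> ('s \<Rightarrow> real) \<Rightarrow> real \<Rightarrow> 's \<Rightarrow> real" where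
  "ctmc_dist S lam P p0 t s =
     (\<Sum>n. exp (- lam * t) * (lam * t) ^ n / fact n * ((mat_vec S P ^^ n) p0) s)"

definition chain_step :: "'s set \<Rightarrow> ('s \<Rightarrow> 's \<Rightarrow> real) \<Rightarrow> 's \<Rightarrow> 's \<Rightarrow> bool" where
  "chain_step S P i j \<longleftrightarrow> i \<in> S \<and> j \<in> S \<and> P j i > 0"

definition reaches :: "'s set \<Rightarrow> ('s \<Rightarrow> 's \<Rightarrow> real) \<Rightarrow> 's \<Rightarrow> 's \<Rightarrow> bool" where
  "reaches S P = (chain_step S P)\<^sup>*\<^sup>*"

definition communicates :: "'s set \<Rightarrow> ('s \<Rightarrow> 's \<Rightarrow> real) \<Rightarrow> 's \<Rightarrow> 's \<Rightarrow> bool" where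
  "communicates S P i j \<longleftrightarrow> reaches S P i j \<and> reaches S P j i"

definition comm_class :: "'s set \<Rightarrow> ('s \<Rightarrow> 's \<Rightarrow> real) \<Rightarrow> 's set \<Rightarrow> bool" where
  "comm_class S P K \<longleftrightarrow> (\<exists>i\<in>S. K = {j\<in>S. communicates S P i j})"

text \<open>For a finite chain, a state is recurrent iff every state reachable from it leads back to it.\<close>
definition recurrent_state :: "'s set \<Rightarrow> ('s \<Rightarrow> 's \<Rightarrow> real) \<Rightarrow> 's \<Rightarrow> bool" where
  "recurrent_state S P i \<longleftrightarrow> i \<in> S \<and> (\<forall>j. reaches S P i j \<longrightarrow> reaches S P j i)"

definition recurrent_class :: "'s set \<Rightarrow> ('s \<Rightarrow> 's \<Rightarrow> real) \<Rightarrow> 's set \<Rightarrow> bool" where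
  "recurrent_class S P K \<longleftrightarrow> comm_class S P K \<and> (\<forall>i\<in>K. recurrent_state S P i)"

end

theory Submission
  imports Defs
begin

locale ctm =
  fixes S :: "'s set" and P :: "'s \<Rightarrow> 's \<Rightarrow> real" and lam :: real
  assumes finS: "finite S" and neS: "S \<noteq> {}"
    and Pnn: "\<And>i j. i \<in> S \<Longrightarrow> j \<in> S \<Longrightarrow> P j i \<ge> 0"
    and Pcol: "\<And>i. i \<in> S \<Longrightarrow> (\<Sum>j\<in>S. P j i) = 1"
    and lpos: "lam > 0"
begin

abbreviation mv where "mv \<equiv> mat_vec S P"
definition vec :: "('s \<Rightarrow> real) \<Rightarrow> bool" where "vec x \<longleftrightarrow> (\<forall>s. s \<notin> S \<longrightarrow> x s = 0)"
definition w :: "real \<Rightarrow> nat \<Rightarrow> real" where "w t n = exp (- lam * t) * (lam * t) ^ n / fact n"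
definition T :: "real \<Rightarrow> ('s \<Rightarrow> real) \<Rightarrow> 's \<Rightarrow> real" where
  "T t x s = (\<Sum>n. w t n * (mv ^^ n) x s)"
definition n1 :: "('s \<Rightarrow> real) \<Rightarrow> real" where "n1 x = (\<Sum>s\<in>S. \<bar>x s\<bar>)"
definition dl :: "'s \<Rightarrow> 's \<Rightarrow> real" where "dl i = (\<lambda>s. if s = i then 1 else 0)"

lemma T_ctmc: "ctmc_dist S lam P x t s = T t x s"
  by (simp add: ctmc_dist_def T_def w_def)

lemma mv_vec: "vec (mv x)" by (simp add: vec_def mat_vec_def)

lemma pw_vec: "vec x \<Longrightarrow> vec ((mv ^^ n) x)"
  by (cases n) (auto simp: mv_vec)

lemma dl_vec: "i \<in> S \<Longrightarrow> vec (dl i)" by (auto simp: vec_def dl_def)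

lemma mv_lin: "finite I \<Longrightarrow> mv (\<lambda>s. \<Sum>l\<in>I. c l * f l s) s = (\<Sum>l\<in>I. c l * mv (f l) s)"
proof (cases "s \<in> S")
  case True
  have "mv (\<lambda>s. \<Sum>l\<in>I. c l * f l s) s = (\<Sum>s'\<in>S. \<Sum>l\<in>I. P s s' * (c l * f l s'))"
    using True by (simp add: mat_vec_def sum_distrib_left)
  also have "\<dots> = (\<Sum>l\<in>I. \<Sum>s'\<in>S. c l * (P s s' * f l s'))"
    by (subst sum.swap) (simp add: algebra_simps)
  also have "\<dots> = (\<Sum>l\<in>I. c l * mv (f l) s)"
    using True by (simp add: mat_vec_def sum_distrib_left)
  finally show ?thesis .
qed (simp add: mat_vec_def)

lemma pw_lin: "finite I \<Longrightarrow> (mv ^^ n) (\<lambda>s. \<Sum>l\<in>I. c l * f l s) = (\<lambda>s. \<Sum>l\<in>I. c l * (mv ^^ n) (f l) s)"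
proof (induction n)
  case (Suc n) then show ?case by (simp add: mv_lin[OF Suc.prems])
qed simp

lemma mv_diff: "mv (\<lambda>s. x s - y s) s = mv x s - mv y s"
  by (simp add: mat_vec_def algebra_simps sum_subtractf)

lemma pw_diff: "(mv ^^ n) (\<lambda>s. x s - y s) = (\<lambda>s. (mv ^^ n) x s - (mv ^^ n) y s)"
  by (induction n) (simp_all add: mv_diff)

lemma mv_nonneg: "(\<And>s. x s \<ge> 0) \<Longrightarrow> mv x s \<ge> 0"
  by (auto simp: mat_vec_def intro!: sum_nonneg mult_nonneg_nonneg Pnn)

lemma pw_nonneg: "(\<And>s. x s \<ge> 0) \<Longrightarrow> (mv ^^ n) x s \<ge> 0"
proof (induction n arbitrary: s)
  case (Suc n) then show ?case by (simp add: mv_nonneg)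
qed simp

lemma mv_sum: "(\<Sum>s\<in>S. mv x s) = (\<Sum>s\<in>S. x s)"
proof -
  have "(\<Sum>s\<in>S. mv x s) = (\<Sum>s\<in>S. \<Sum>s'\<in>S. P s s' * x s')" by (simp add: mat_vec_def)
  also have "\<dots> = (\<Sum>s'\<in>S. (\<Sum>s\<in>S. P s s') * x s')" by (subst sum.swap) (simp add: sum_distrib_right)
  also have "\<dots> = (\<Sum>s'\<in>S. x s')" by (simp add: Pcol)
  finally show ?thesis .
qed

lemma pw_sum: "(\<Sum>s\<in>S. (mv ^^ n) x s) = (\<Sum>s\<in>S. x s)"
  by (induction n) (simp_all add: mv_sum)

lemma mv_n1: "n1 (mv x) \<le> n1 x"
proof -
  have "n1 (mv x) = (\<Sum>s\<in>S. \<bar>\<Sum>s'\<in>S. P s s' * x s'\<bar>)" by (simp add: n1_def mat_vec_def)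
  also have "\<dots> \<le> (\<Sum>s\<in>S. \<Sum>s'\<in>S. P s s' * \<bar>x s'\<bar>)"
    by (intro sum_mono order.trans[OF sum_abs]) (simp add: abs_mult Pnn)
  also have "\<dots> = (\<Sum>s'\<in>S. (\<Sum>s\<in>S. P s s') * \<bar>x s'\<bar>)" by (subst sum.swap) (simp add: sum_distrib_right)
  also have "\<dots> = n1 x" by (simp add: Pcol n1_def)
  finally show ?thesis .
qed

lemma pw_n1: "n1 ((mv ^^ n) x) \<le> n1 x"
  by (induction n) (auto intro: order.trans[OF mv_n1])

lemma abs_le_n1: "vec y \<Longrightarrow> \<bar>y s\<bar> \<le> n1 y"
  unfolding n1_def vec_def
  by (cases "s \<in> S") (auto intro: member_le_sum[where f="\<lambda>s. \<bar>y s\<bar>", OF _ _ finS] sum_nonneg)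

lemma pw_bound: "vec x \<Longrightarrow> \<bar>(mv ^^ n) x s\<bar> \<le> n1 x"
  using abs_le_n1[OF pw_vec] pw_n1 order.trans by blast


lemma w_abs_summable: "summable (\<lambda>n. \<bar>w t n\<bar>)"
proof -
  have "summable (\<lambda>n. \<bar>lam * t\<bar> ^ n /\<^sub>R fact n)" using exp_converges sums_summable by blast
  then have "summable (\<lambda>n. exp (- lam * t) * (\<bar>lam * t\<bar> ^ n /\<^sub>R fact n))" by (rule summable_mult)
  moreover have "\<bar>w t n\<bar> = exp (- lam * t) * (\<bar>lam * t\<bar> ^ n /\<^sub>R fact n)" for n
    by (simp add: w_def abs_mult power_abs divide_inverse)
  ultimately show ?thesis by simp
qed

lemma w_sums: "(\<lambda>n. w t n) sums 1"
proof -
  have "(\<lambda>n. exp (- lam * t) * ((lam * t) ^ n /\<^sub>R fact n)) sums (exp (- lam * t) * exp (lam * t))"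
    by (rule sums_mult[OF exp_converges])
  moreover have "exp (- lam * t) * exp (lam * t) = 1" by (simp add: exp_minus field_simps)
  moreover have "exp (- lam * t) * ((lam * t) ^ n /\<^sub>R fact n) = w t n" for n
    by (simp add: w_def divide_inverse)
  ultimately show ?thesis by simp
qed

lemma w_nonneg: "t \<ge> 0 \<Longrightarrow> w t n \<ge> 0"
  using lpos by (simp add: w_def)

lemma w_pos: "t > 0 \<Longrightarrow> w t n > 0"
  using lpos by (simp add: w_def)

lemma summ_bdd_abs: assumes "\<And>n. \<bar>a n\<bar> \<le> B" shows "summable (\<lambda>n. \<bar>w t n * a n\<bar>)"
proof (rule summable_comparison_test'[OF summable_mult2[OF w_abs_summable[of t], of B]])
  fix n
  show "norm \<bar>w t n * a n\<bar> \<le> \<bar>w t n\<bar> * B"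
    unfolding abs_mult real_norm_def abs_abs by (rule mult_left_mono) (auto simp: assms)
qed

lemma summ_bdd: "(\<And>n. \<bar>a n\<bar> \<le> B) \<Longrightarrow> summable (\<lambda>n. w t n * a n)"
  by (rule summable_rabs_cancel[OF summ_bdd_abs])

lemma T_summ: "vec x \<Longrightarrow> summable (\<lambda>n. w t n * (mv ^^ n) x s)"
  by (rule summ_bdd[OF pw_bound])

lemma T_summ_abs: "vec x \<Longrightarrow> summable (\<lambda>n. \<bar>w t n * (mv ^^ n) x s\<bar>)"
  by (rule summ_bdd_abs[OF pw_bound])

lemma T_diff: "vec x \<Longrightarrow> vec y \<Longrightarrow> T t (\<lambda>s. x s - y s) s = T t x s - T t y s"
  unfolding T_def pw_diff
  by (simp add: right_diff_distrib suminf_diff[OF T_summ T_summ])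

lemma T_lin: "finite I \<Longrightarrow> (\<And>l. l \<in> I \<Longrightarrow> vec (f l)) \<Longrightarrow>
    T t (\<lambda>s. \<Sum>l\<in>I. c l * f l s) s = (\<Sum>l\<in>I. c l * T t (f l) s)"
proof -
  assume I: "finite I" and v: "\<And>l. l \<in> I \<Longrightarrow> vec (f l)"
  have "T t (\<lambda>s. \<Sum>l\<in>I. c l * f l s) s = (\<Sum>n. \<Sum>l\<in>I. c l * (w t n * (mv ^^ n) (f l) s))"
    unfolding T_def pw_lin[OF I] by (simp add: sum_distrib_left algebra_simps)
  also have "\<dots> = (\<Sum>l\<in>I. \<Sum>n. c l * (w t n * (mv ^^ n) (f l) s))"
    by (rule suminf_sum) (intro summable_mult T_summ v)
  also have "\<dots> = (\<Sum>l\<in>I. c l * T t (f l) s)"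
    unfolding T_def by (intro sum.cong refl suminf_mult T_summ v)
  finally show ?thesis .
qed

lemma T_vec: "vec x \<Longrightarrow> vec (T t x)"
proof -
  assume v: "vec x"
  have "(mv ^^ n) x s = 0" if "s \<notin> S" for n s using pw_vec[OF v] that by (simp add: vec_def)
  then show ?thesis by (simp add: vec_def T_def)
qed

lemma T_nonneg: "t \<ge> 0 \<Longrightarrow> vec x \<Longrightarrow> (\<And>s. x s \<ge> 0) \<Longrightarrow> T t x s \<ge> 0"
  unfolding T_def by (intro suminf_nonneg T_summ mult_nonneg_nonneg w_nonneg pw_nonneg) auto

lemma T_sumS: "vec x \<Longrightarrow> (\<Sum>s\<in>S. T t x s) = (\<Sum>s\<in>S. x s)"
proof -
  assume v: "vec x"
  have "(\<Sum>s\<in>S. T t x s) = (\<Sum>n. \<Sum>s\<in>S. w t n * (mv ^^ n) x s)"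
    unfolding T_def by (rule suminf_sum[symmetric]) (rule T_summ[OF v])
  also have "\<dots> = (\<Sum>n. w t n * (\<Sum>s\<in>S. x s))"
    by (simp only: sum_distrib_left[symmetric] pw_sum)
  also have "\<dots> = (\<Sum>s\<in>S. x s)"
    using sums_unique[OF sums_mult2[OF w_sums[of t], of "\<Sum>s\<in>S. x s"], symmetric] by simp
  finally show ?thesis .
qed

lemma T_fix: "mv x = x \<Longrightarrow> T t x s = x s"
proof -
  assume f: "mv x = x"
  have "(mv ^^ n) x = x" for n by (induction n) (simp_all add: f)
  then show ?thesis
    unfolding T_def using sums_unique[OF sums_mult2[OF w_sums[of t], of "x s"], symmetric] by simp
qed

lemma decomp: "vec y \<Longrightarrow> y = (\<lambda>s. \<Sum>l\<in>S. y l * dl l s)"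
  by (rule ext) (auto simp: vec_def dl_def if_distrib[of "\<lambda>z. _ * z"] sum.delta' finS cong: if_cong)

lemma T_n1: "t \<ge> 0 \<Longrightarrow> vec x \<Longrightarrow> n1 (T t x) \<le> n1 x"
proof -
  assume t: "t \<ge> 0" and v: "vec x"
  define xp where "xp = (\<lambda>s. max (x s) 0)"
  define xn where "xn = (\<lambda>s. max (- x s) 0)"
  have vp: "vec xp" "vec xn" using v by (auto simp: vec_def xp_def xn_def)
  have x: "x = (\<lambda>s. xp s - xn s)" by (auto simp: xp_def xn_def max_def)
  have "n1 (T t x) = (\<Sum>s\<in>S. \<bar>T t xp s - T t xn s\<bar>)"
    unfolding n1_def by (subst x) (simp add: T_diff[OF vp])
  also have "\<dots> \<le> (\<Sum>s\<in>S. T t xp s + T t xn s)"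
  proof (intro sum_mono)
    fix s
    have "T t xp s \<ge> 0" by (rule T_nonneg[OF t vp(1)]) (simp add: xp_def)
    moreover have "T t xn s \<ge> 0" by (rule T_nonneg[OF t vp(2)]) (simp add: xn_def)
    ultimately
    show "\<bar>T t xp s - T t xn s\<bar> \<le> T t xp s + T t xn s" by arith
  qed
  also have "\<dots> = (\<Sum>s\<in>S. xp s) + (\<Sum>s\<in>S. xn s)" by (simp add: sum.distrib T_sumS vp)
  also have "\<dots> = n1 x" unfolding n1_def sum.distrib[symmetric] by (rule sum.cong) (auto simp: xp_def xn_def max_def)
  finally show ?thesis .
qed

end
context ctm begin

lemma w_conv: "(\<Sum>i\<le>k. w a i * w b (k - i)) = w (a + b) k"
proof -
  define E where "E = exp (- lam * a) * exp (- lam * b)"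
  have "(\<Sum>i\<le>k. w a i * w b (k - i))
      = (\<Sum>i\<le>k. E * (of_nat (k choose i) * (lam * a) ^ i * (lam * b) ^ (k - i)) / fact k)"
    by (rule sum.cong) (auto simp: w_def E_def binomial_fact field_simps)
  also have "\<dots> = E * (\<Sum>i\<le>k. of_nat (k choose i) * (lam * a) ^ i * (lam * b) ^ (k - i)) / fact k"
    by (simp add: sum_distrib_left sum_divide_distrib)
  also have "\<dots> = E * (lam * a + lam * b) ^ k / fact k"
    by (simp add: binomial_ring)
  also have "\<dots> = w (a + b) k"
    by (simp add: w_def E_def exp_add[symmetric] algebra_simps)
  finally show ?thesis .
qed

lemma pw_comp: assumes vx: "vec x" and ik: "i \<le> k"
  shows "(\<Sum>l\<in>S. (mv ^^ (k - i)) x l * (mv ^^ i) (dl l) j) = (mv ^^ k) x j"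
proof -
  have "(mv ^^ k) x = (mv ^^ i) ((mv ^^ (k - i)) x)"
    by (metis funpow_add comp_apply le_add_diff_inverse ik)
  also have "\<dots> = (mv ^^ i) (\<lambda>s. \<Sum>l\<in>S. (mv ^^ (k - i)) x l * dl l s)"
    using decomp[OF pw_vec[OF vx]] by (rule arg_cong)
  also have "\<dots> = (\<lambda>s. \<Sum>l\<in>S. (mv ^^ (k - i)) x l * (mv ^^ i) (dl l) s)"
    by (rule pw_lin[OF finS])
  finally show ?thesis by simp
qed

lemma T_add: assumes vx: "vec x" shows "T (a + b) x j = T a (T b x) j"
proof -
  have vy: "vec (T b x)" by (rule T_vec[OF vx])
  have 1: "T a (T b x) j = (\<Sum>l\<in>S. T b x l * T a (dl l) j)"
  proof -
    have "T a (T b x) j = T a (\<lambda>s. \<Sum>l\<in>S. T b x l * dl l s) j"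
      by (rule arg_cong[where f="\<lambda>z. T a z j", OF decomp[OF vy]])
    also have "\<dots> = (\<Sum>l\<in>S. T b x l * T a (dl l) j)"
      by (rule T_lin[OF finS dl_vec])
    finally show ?thesis .
  qed
  have C: "(\<lambda>k. \<Sum>i\<le>k. (w a i * (mv ^^ i) (dl l) j) * (w b (k - i) * (mv ^^ (k - i)) x l))
      sums (T a (dl l) j * T b x l)" if l: "l \<in> S" for l
    unfolding T_def
    by (rule Cauchy_product_sums) (use T_summ_abs[OF dl_vec[OF l]] T_summ_abs[OF vx] in auto)
  have 2: "(\<lambda>k. \<Sum>l\<in>S. \<Sum>i\<le>k. (w a i * (mv ^^ i) (dl l) j) * (w b (k - i) * (mv ^^ (k - i)) x l))
      sums (\<Sum>l\<in>S. T a (dl l) j * T b x l)"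
    by (rule sums_sum) (rule C)
  have 3: "(\<Sum>l\<in>S. \<Sum>i\<le>k. (w a i * (mv ^^ i) (dl l) j) * (w b (k - i) * (mv ^^ (k - i)) x l))
      = w (a + b) k * (mv ^^ k) x j" for k
  proof -
    have "(\<Sum>l\<in>S. \<Sum>i\<le>k. (w a i * (mv ^^ i) (dl l) j) * (w b (k - i) * (mv ^^ (k - i)) x l))
      = (\<Sum>i\<le>k. \<Sum>l\<in>S. (w a i * w b (k - i)) * ((mv ^^ (k - i)) x l * (mv ^^ i) (dl l) j))"
      by (subst sum.swap) (simp add: algebra_simps)
    also have "\<dots> = (\<Sum>i\<le>k. (w a i * w b (k - i)) * (mv ^^ k) x j)"
      by (rule sum.cong[OF refl]) (simp add: sum_distrib_left[symmetric] pw_comp[OF vx])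
    also have "\<dots> = w (a + b) k * (mv ^^ k) x j"
      by (simp add: sum_distrib_right[symmetric] w_conv)
    finally show ?thesis .
  qed
  have "T (a + b) x j = (\<Sum>l\<in>S. T a (dl l) j * T b x l)"
    using 2 unfolding 3 T_def by (rule sums_unique[symmetric])
  also have "\<dots> = T a (T b x) j" by (simp add: 1 mult.commute)
  finally show ?thesis .
qed

end

context ctm begin

lemma mv_T: assumes vx: "vec x" shows "mv (T t x) s = T t (mv x) s"
proof (cases "s \<in> S")
  case True
  have "mv (T t x) s = (\<Sum>s'\<in>S. \<Sum>n. P s s' * (w t n * (mv ^^ n) x s'))"
    using True by (simp add: mat_vec_def T_def suminf_mult[OF T_summ[OF vx]])
  also have "\<dots> = (\<Sum>n. \<Sum>s'\<in>S. P s s' * (w t n * (mv ^^ n) x s'))"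
    by (rule suminf_sum[symmetric]) (intro summable_mult T_summ[OF vx])
  also have "\<dots> = (\<Sum>n. w t n * mv ((mv ^^ n) x) s)"
    using True by (simp add: mat_vec_def sum_distrib_left algebra_simps)
  also have "\<dots> = T t (mv x) s" by (simp add: T_def funpow_swap1)
  finally show ?thesis .
next
  case False
  then show ?thesis using T_vec[OF mv_vec, of t x] by (simp add: mat_vec_def vec_def)
qed

lemma gen_eq: "s \<in> S \<Longrightarrow> (\<Sum>s'\<in>S. generator lam P s s' * y s') = lam * (mv y s - y s)"
proof -
  assume s: "s \<in> S"
  have "(\<Sum>s'\<in>S. generator lam P s s' * y s') = (\<Sum>s'\<in>S. lam * (P s s' * y s') - lam * ((if s = s' then 1 else 0) * y s'))"
    by (intro sum.cong) (simp_all add: generator_def algebra_simps)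
  also have "\<dots> = lam * (\<Sum>s'\<in>S. P s s' * y s') - lam * (\<Sum>s'\<in>S. (if s = s' then 1 else 0) * y s')"
    by (simp add: sum_subtractf sum_distrib_left)
  also have "\<dots> = lam * (mv y s - y s)"
    using s finS by (simp add: mat_vec_def right_diff_distrib if_distrib[of "\<lambda>z. z * _"] cong: if_cong)
  finally show ?thesis .
qed

lemma n1_nonneg: "n1 x \<ge> 0" by (simp add: n1_def sum_nonneg)

lemma pdist_props: "pdist S q \<Longrightarrow> vec q \<and> (\<forall>s. q s \<ge> 0) \<and> (\<Sum>s\<in>S. q s) = 1"
  unfolding pdist_def vec_def by (metis order_refl)

lemma n1_pdist: "pdist S q \<Longrightarrow> n1 q = 1"
  unfolding pdist_def n1_def by simp

lemma T_pdist: "t \<ge> 0 \<Longrightarrow> pdist S q \<Longrightarrow> pdist S (T t q)"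
  using pdist_props[of q] T_vec T_nonneg T_sumS unfolding pdist_def vec_def by metis

lemma mv_pdist: "pdist S q \<Longrightarrow> pdist S (mv q)"
  using pdist_props[of q] mv_vec mv_nonneg mv_sum unfolding pdist_def vec_def by metis

lemma reach_pos: assumes i: "i \<in> S" and r: "reaches S P i j" shows "\<exists>k. (mv ^^ k) (dl i) j > 0"
  using r[unfolded reaches_def]
proof (induction rule: rtranclp_induct)
  case base
  show ?case by (rule exI[of _ 0]) (simp add: dl_def)
next
  case (step y z)
  then obtain k where k: "(mv ^^ k) (dl i) y > 0" by blast
  have yz: "y \<in> S" "z \<in> S" "P z y > 0" using step(2) by (auto simp: chain_step_def)
  have nn: "\<And>s. (mv ^^ k) (dl i) s \<ge> 0" by (rule pw_nonneg) (simp add: dl_def)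
  have "0 < P z y * (mv ^^ k) (dl i) y" using yz k by simp
  also have "\<dots> \<le> (\<Sum>s'\<in>S. P z s' * (mv ^^ k) (dl i) s')"
    by (rule member_le_sum[where f="\<lambda>s'. P z s' * (mv ^^ k) (dl i) s'", OF yz(1) _ finS])
       (use yz nn Pnn in auto)
  also have "\<dots> = (mv ^^ Suc k) (dl i) z" using yz by (simp add: mat_vec_def)
  finally show ?case by blast
qed

end

locale ctm_r = ctm +
  fixes r
  assumes rS: "r \<in> S" and reach: "\<And>i. i \<in> S \<Longrightarrow> reaches S P i r"
begin

lemma T1pos: "i \<in> S \<Longrightarrow> T 1 (dl i) r > 0"
proof -
  assume i: "i \<in> S"
  obtain k where k: "(mv ^^ k) (dl i) r > 0" using reach_pos[OF i reach[OF i]] by blast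
  show ?thesis unfolding T_def
  proof (rule suminf_pos2[OF T_summ[OF dl_vec[OF i]], where i=k])
    fix n show "0 \<le> w 1 n * (mv ^^ n) (dl i) r"
      by (intro mult_nonneg_nonneg w_nonneg pw_nonneg) (auto simp: dl_def)
    show "0 < w 1 k * (mv ^^ k) (dl i) r" by (intro mult_pos_pos w_pos k) simp
  qed
qed

definition dd where "dd = min (Min ((\<lambda>i. T 1 (dl i) r) ` S)) 1"

lemma dd_pos: "dd > 0" and dd_le1: "dd \<le> 1"
  using T1pos finS neS by (auto simp: dd_def)

lemma dd_le: "i \<in> S \<Longrightarrow> dd \<le> T 1 (dl i) r"
  using finS by (auto simp: dd_def intro: min.coboundedI1)

lemma doeb: assumes vx: "vec x" and nn: "\<And>s. x s \<ge> 0" shows "T 1 x r \<ge> dd * (\<Sum>s\<in>S. x s)"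
proof -
  have "T 1 x r = T 1 (\<lambda>s. \<Sum>l\<in>S. x l * dl l s) r"
    by (rule arg_cong[where f="\<lambda>z. T 1 z r", OF decomp[OF vx]])
  also have "\<dots> = (\<Sum>l\<in>S. x l * T 1 (dl l) r)" by (rule T_lin[OF finS dl_vec])
  also have "\<dots> \<ge> (\<Sum>l\<in>S. x l * dd)" by (intro sum_mono mult_left_mono dd_le nn)
  finally show ?thesis by (simp add: sum_distrib_right mult.commute)
qed

lemma contr: assumes vx: "vec x" and s0: "(\<Sum>s\<in>S. x s) = 0"
  shows "n1 (T 1 x) \<le> (1 - dd) * n1 x"
proof -
  define xp where "xp = (\<lambda>s. max (x s) 0)"
  define xn where "xn = (\<lambda>s. max (- x s) 0)"
  have vp: "vec xp" "vec xn" using vx by (auto simp: vec_def xp_def xn_def)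
  have np: "\<And>s. xp s \<ge> 0" "\<And>s. xn s \<ge> 0" by (auto simp: xp_def xn_def)
  have x: "x = (\<lambda>s. xp s - xn s)" by (auto simp: xp_def xn_def max_def)
  define a where "a = (\<Sum>s\<in>S. xp s)"
  have xs: "\<And>s. x s = xp s - xn s" by (auto simp: xp_def xn_def max_def)
  have sxn: "(\<Sum>s\<in>S. xn s) = a"
  proof -
    have "(\<Sum>s\<in>S. x s) = (\<Sum>s\<in>S. xp s - xn s)" by (rule sum.cong) (simp_all add: xs)
    also have "\<dots> = (\<Sum>s\<in>S. xp s) - (\<Sum>s\<in>S. xn s)" by (rule sum_subtractf)
    finally show ?thesis using s0 unfolding a_def by linarith
  qed
  have n1x: "n1 x = 2 * a"
  proof -
    have "n1 x = (\<Sum>s\<in>S. xp s + xn s)" unfolding n1_def by (rule sum.cong) (auto simp: xp_def xn_def max_def)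
    then show ?thesis by (simp add: sum.distrib sxn a_def)
  qed
  define u where "u = T 1 xp"
  define v where "v = T 1 xn"
  have un: "\<And>s. u s \<ge> 0" and vn: "\<And>s. v s \<ge> 0"
    unfolding u_def v_def by (auto intro: T_nonneg vp np)
  have su: "(\<Sum>s\<in>S. u s) = a" unfolding u_def a_def by (simp add: T_sumS vp)
  have sv: "(\<Sum>s\<in>S. v s) = a" unfolding v_def sxn[symmetric] by (simp add: T_sumS vp)
  have ur: "u r \<ge> dd * a" unfolding u_def a_def by (intro doeb vp np)
  have vr: "v r \<ge> dd * a" unfolding v_def sxn[symmetric] by (intro doeb vp np)
  have Tx: "T 1 x s = u s - v s" for s
    unfolding u_def v_def by (subst x) (rule T_diff[OF vp])
  have "n1 (T 1 x) = \<bar>u r - v r\<bar> + (\<Sum>s\<in>S - {r}. \<bar>u s - v s\<bar>)"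
    unfolding n1_def Tx by (rule sum.remove[OF finS rS])
  also have "\<dots> \<le> ((u r - dd * a) + (v r - dd * a)) + (\<Sum>s\<in>S - {r}. u s + v s)"
  proof (rule add_mono)
    show "\<bar>u r - v r\<bar> \<le> u r - dd * a + (v r - dd * a)" using ur vr by arith
    show "(\<Sum>s\<in>S - {r}. \<bar>u s - v s\<bar>) \<le> (\<Sum>s\<in>S - {r}. u s + v s)"
      by (intro sum_mono) (use un vn in \<open>auto simp: abs_le_iff\<close>)
  qed
  also have "\<dots> = (u r + (\<Sum>s\<in>S - {r}. u s)) + (v r + (\<Sum>s\<in>S - {r}. v s)) - 2 * dd * a"
    by (simp add: sum.distrib algebra_simps)
  also have "\<dots> = 2 * a - 2 * dd * a"
    using sum.remove[OF finS rS, of u] sum.remove[OF finS rS, of v] su sv by simp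
  also have "\<dots> = (1 - dd) * n1 x" by (simp add: n1x algebra_simps)
  finally show ?thesis .
qed

lemma iter: assumes vx: "vec x" and s0: "(\<Sum>s\<in>S. x s) = 0" and t: "t \<ge> 0"
  shows "n1 (T (real m + t) x) \<le> (1 - dd) ^ m * n1 x"
proof (induction m)
  case 0
  then show ?case using T_n1[OF t vx] by simp
next
  case (Suc m)
  let ?y = "T (real m + t) x"
  have vy: "vec ?y" by (rule T_vec[OF vx])
  have sy: "(\<Sum>s\<in>S. ?y s) = 0" using T_sumS[OF vx] s0 by simp
  have "n1 (T (real (Suc m) + t) x) = n1 (T 1 ?y)"
    unfolding n1_def using T_add[OF vx, of 1 "real m + t"] by (simp add: add.assoc)
  also have "\<dots> \<le> (1 - dd) * n1 ?y" by (rule contr[OF vy sy])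
  also have "\<dots> \<le> (1 - dd) * ((1 - dd) ^ m * n1 x)"
    by (rule mult_left_mono[OF Suc]) (use dd_le1 in simp)
  finally show ?case by simp
qed

lemma key: assumes q: "pdist S q" and q': "pdist S q'" and t: "t \<ge> real m" and t': "t' \<ge> real m"
  shows "\<bar>T t q s - T t' q' s\<bar> \<le> 2 * (1 - dd) ^ m"
proof -
  define z where "z = (\<lambda>s. T (t - real m) q s - T (t' - real m) q' s)"
  have pq: "pdist S (T (t - real m) q)" "pdist S (T (t' - real m) q')"
    using T_pdist q q' t t' by auto
  have v1: "vec (T (t - real m) q)" "vec (T (t' - real m) q')" using pq pdist_props by blast+
  have vz: "vec z" using v1 by (auto simp: vec_def z_def)
  have sz: "(\<Sum>s\<in>S. z s) = 0" using pq pdist_props unfolding z_def by (simp add: sum_subtractf)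
  have nz: "n1 z \<le> 2"
  proof -
    have "n1 z \<le> n1 (T (t - real m) q) + n1 (T (t' - real m) q')"
      unfolding n1_def z_def sum.distrib[symmetric] by (intro sum_mono) arith
    then show ?thesis using n1_pdist pq by simp
  qed
  have "T t q s - T t' q' s = T (real m) z s"
    unfolding z_def T_diff[OF v1]
    using T_add[OF pdist_props[OF q, THEN conjunct1], of "real m" "t - real m" s]
      T_add[OF pdist_props[OF q', THEN conjunct1], of "real m" "t' - real m" s] by simp
  also have "\<bar>\<dots>\<bar> \<le> n1 (T (real m + 0) z)" using abs_le_n1[OF T_vec[OF vz]] by simp
  also have "\<dots> \<le> (1 - dd) ^ m * n1 z" by (rule iter[OF vz sz]) simp
  also have "\<dots> \<le> (1 - dd) ^ m * 2" by (rule mult_left_mono[OF nz]) (use dd_le1 in simp)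
  finally show ?thesis by simp
qed

lemma at_top_nb: "(at_top::real filter) \<noteq> bot"
  using trivial_limit_at_top_linorder unfolding trivial_limit_def by blast

definition e where "e k s = T (real k) (dl r) s"
definition eta where "eta s = e 0 s + (\<Sum>k. e (Suc k) s - e k s)"

lemma dl_pdist: "pdist S (dl r)" using rS finS by (simp add: pdist_def dl_def)

lemma e_lim: "(\<lambda>k. e k s) \<longlonglongrightarrow> eta s"
proof -
  have sm: "summable (\<lambda>k. e (Suc k) s - e k s)"
  proof (rule summable_comparison_test'[OF summable_mult[OF summable_geometric[of "1 - dd"], of 2]])
    show "norm (1 - dd) < 1" using dd_pos dd_le1 by simp
    fix k show "norm (e (Suc k) s - e k s) \<le> 2 * (1 - dd) ^ k"
      unfolding e_def real_norm_def by (rule key[OF dl_pdist dl_pdist]) auto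
  qed
  have "(\<lambda>k. e 0 s + (\<Sum>i<k. e (Suc i) s - e i s)) \<longlonglongrightarrow> eta s"
    unfolding eta_def by (intro tendsto_add tendsto_const summable_LIMSEQ sm)
  then show ?thesis by (simp add: sum_lessThan_telescope[of "\<lambda>i. e i s"])
qed

lemma conv: assumes q: "pdist S q" shows "((\<lambda>t. T t q s) \<longlongrightarrow> eta s) at_top"
proof -
  have bnd: "\<bar>T t q s - eta s\<bar> \<le> 2 * (1 - dd) ^ m" if t: "t \<ge> real m" for t m
  proof (rule LIMSEQ_le_const2)
    show "(\<lambda>k. \<bar>T t q s - e k s\<bar>) \<longlonglongrightarrow> \<bar>T t q s - eta s\<bar>"
      by (intro tendsto_intros e_lim)
    show "\<exists>N. \<forall>k\<ge>N. \<bar>T t q s - e k s\<bar> \<le> 2 * (1 - dd) ^ m"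
      unfolding e_def by (rule exI[of _ m]) (auto intro!: key[OF q dl_pdist] t)
  qed
  have lim0: "(\<lambda>m. 2 * (1 - dd) ^ m) \<longlonglongrightarrow> 0"
    using tendsto_mult_right_zero[OF LIMSEQ_realpow_zero[of "1 - dd"]] dd_pos dd_le1 by simp
  show ?thesis unfolding tendsto_iff
  proof (intro allI impI)
    fix \<epsilon> :: real assume "\<epsilon> > 0"
    from order_tendstoD(2)[OF lim0 this] obtain N where N: "2 * (1 - dd) ^ N < \<epsilon>"
      by (auto simp: eventually_sequentially)
    show "\<forall>\<^sub>F t in at_top. dist (T t q s) (eta s) < \<epsilon>"
      unfolding eventually_at_top_linorder
      by (rule exI[of _ "real N"]) (use bnd N in \<open>fastforce simp: dist_real_def\<close>)
  qed
qed

lemma eta_pdist: "pdist S eta"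
proof -
  have "eta s = 0" if "s \<notin> S" for s
  proof -
    have "e k s = 0" for k using T_vec[OF dl_vec[OF rS]] that by (simp add: e_def vec_def)
    then show ?thesis by (simp add: eta_def)
  qed
  moreover have "eta s \<ge> 0" for s
  proof -
    have "e k s \<ge> 0" for k unfolding e_def by (rule T_nonneg[OF _ dl_vec[OF rS]]) (auto simp: dl_def)
    then show ?thesis by (intro LIMSEQ_le_const[OF e_lim]) blast
  qed
  moreover have "(\<Sum>s\<in>S. eta s) = 1"
  proof -
    have "(\<lambda>k. \<Sum>s\<in>S. e k s) \<longlonglongrightarrow> (\<Sum>s\<in>S. eta s)" by (intro tendsto_sum e_lim)
    moreover have "(\<Sum>s\<in>S. e k s) = 1" for k
      using T_pdist[OF _ dl_pdist, of "real k"] by (simp add: e_def pdist_def)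
    ultimately have "(\<lambda>k. 1::real) \<longlonglongrightarrow> (\<Sum>s\<in>S. eta s)" by simp
    then show ?thesis by (rule LIMSEQ_unique[OF _ tendsto_const])
  qed
  ultimately show ?thesis by (simp add: pdist_def)
qed

lemma eta_fix: "s \<in> S \<Longrightarrow> mv eta s = eta s"
proof -
  assume s: "s \<in> S"
  have vq: "vec (dl r)" by (rule dl_vec[OF rS])
  have "((\<lambda>t. mv (T t (dl r)) s) \<longlongrightarrow> mv eta s) at_top"
    using s unfolding mat_vec_def by (simp, intro tendsto_intros conv dl_pdist)
  moreover have "((\<lambda>t. mv (T t (dl r)) s) \<longlongrightarrow> eta s) at_top"
    unfolding mv_T[OF vq] by (intro conv mv_pdist dl_pdist)
  ultimately show ?thesis using tendsto_unique at_top_nb by blast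
qed

theorem main:
  "\<exists>eta. stationary S (generator lam P) eta
     \<and> (\<forall>eta'. stationary S (generator lam P) eta' \<longrightarrow> eta' = eta)
     \<and> (\<forall>p0. pdist S p0 \<longrightarrow> (\<forall>s\<in>S. ((\<lambda>t. ctmc_dist S lam P p0 t s) \<longlongrightarrow> eta s) at_top))"
proof (intro exI conjI allI impI ballI)
  show "stationary S (generator lam P) eta"
    unfolding stationary_def using eta_pdist by (simp add: gen_eq eta_fix)
next
  fix eta' assume st: "stationary S (generator lam P) eta'"
  have pd: "pdist S eta'" using st by (simp add: stationary_def)
  have "mv eta' s = eta' s" for s
  proof (cases "s \<in> S")
    case True
    from st True have "(\<Sum>s'\<in>S. generator lam P s s' * eta' s') = 0" unfolding stationary_def by blast
    then have "lam * (mv eta' s - eta' s) = 0" by (simp only: gen_eq[OF True])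
    then show ?thesis using lpos by simp
  next
    case False then show ?thesis using pd by (simp add: mat_vec_def pdist_def)
  qed
  then have fx: "mv eta' = eta'" by (rule ext)
  show "eta' = eta"
  proof (rule ext)
    fix s
    have "((\<lambda>t. T t eta' s) \<longlongrightarrow> eta s) at_top" by (rule conv[OF pd])
    then have "((\<lambda>t::real. eta' s) \<longlongrightarrow> eta s) at_top" by (simp add: T_fix[OF fx])
    then show "eta' s = eta s" using tendsto_unique at_top_nb tendsto_const by blast
  qed
next
  fix p0 s assume pp: "pdist S p0" "s \<in> S"
  from pp(1) show "((\<lambda>t. ctmc_dist S lam P p0 t s) \<longlongrightarrow> eta s) at_top"
    unfolding T_ctmc by (rule conv)
qed

end

lemma reaches_S: "reaches S P i j \<Longrightarrow> i \<in> S \<Longrightarrow> j \<in> S"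
  unfolding reaches_def by (induction rule: rtranclp_induct) (auto simp: chain_step_def)

lemma reaches_trans: "reaches S P i j \<Longrightarrow> reaches S P j k \<Longrightarrow> reaches S P i k"
  unfolding reaches_def by (rule rtranclp_trans)

lemma reaches_refl: "reaches S P i i"
  unfolding reaches_def by simp

lemma reaches_mono: "(\<And>i j. chain_step S Q i j \<Longrightarrow> chain_step S P i j) \<Longrightarrow> reaches S Q i j \<Longrightarrow> reaches S P i j"
  unfolding reaches_def
proof -
  assume m: "\<And>i j. chain_step S Q i j \<Longrightarrow> chain_step S P i j" and r: "(chain_step S Q)\<^sup>*\<^sup>* i j"
  from r show "(chain_step S P)\<^sup>*\<^sup>* i j"
    by (induction rule: rtranclp_induct) (auto intro: rtranclp.rtrancl_into_rtrancl m)
qed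

lemma exists_rec: assumes fin: "finite S"
  shows "i \<in> S \<Longrightarrow> \<exists>j. reaches S P i j \<and> recurrent_state S P j"
proof -
  define R where "R j = {k. reaches S P j k}" for j
  have finR: "finite (R j)" if "j \<in> S" for j
    using reaches_S[of S P j] that fin by (auto simp: R_def intro: finite_subset)
  have "\<forall>i. i \<in> S \<longrightarrow> card (R i) = n \<longrightarrow> (\<exists>j. reaches S P i j \<and> recurrent_state S P j)" for n
  proof (induction n rule: less_induct)
    case (less n)
    show ?case
    proof (intro allI impI)
      fix i assume i: "i \<in> S" and cn: "card (R i) = n"
      show "\<exists>j. reaches S P i j \<and> recurrent_state S P j"
      proof (cases "recurrent_state S P i")
        case True then show ?thesis using reaches_refl[of S P i] by blast
      next
        case False
        then obtain k where ik: "reaches S P i k" and ki: "\<not> reaches S P k i"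
          using i by (auto simp: recurrent_state_def)
        have k: "k \<in> S" using reaches_S[OF ik i] .
        have "R k \<subset> R i"
          using ik ki reaches_trans[OF ik] reaches_refl[of S P i] by (auto simp: R_def)
        then have "card (R k) < n" using psubset_card_mono[OF finR[OF i]] cn by simp
        with less k obtain j where "reaches S P k j" "recurrent_state S P j" by blast
        then show ?thesis using reaches_trans[OF ik] by blast
      qed
    qed
  qed
  then show "i \<in> S \<Longrightarrow> ?thesis" by blast
qed

lemma rec_class_of: assumes a: "recurrent_state S P a"
  shows "recurrent_class S P {j \<in> S. communicates S P a j}"
  unfolding recurrent_class_def comm_class_def
proof (intro conjI ballI)
  show "\<exists>i\<in>S. {j \<in> S. communicates S P a j} = {j \<in> S. communicates S P i j}"
    by (rule bexI[where x=a]) (use a in \<open>simp_all add: recurrent_state_def\<close>)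
next
  fix i assume "i \<in> {j \<in> S. communicates S P a j}"
  then have i: "i \<in> S" "reaches S P a i" "reaches S P i a" by (auto simp: communicates_def)
  show "recurrent_state S P i"
    unfolding recurrent_state_def
  proof (intro conjI allI impI)
    show "i \<in> S" by (rule i(1))
    fix j assume ij: "reaches S P i j"
    have "reaches S P a j" by (rule reaches_trans[OF i(2) ij])
    then have "reaches S P j a" using a unfolding recurrent_state_def by blast
    then show "reaches S P j i" by (rule reaches_trans[OF _ i(2)])
  qed
qed

lemma two_rec: assumes a: "recurrent_state S P a" and b: "recurrent_state S P b"
  and ba: "\<not> reaches S P b a"
  shows "\<not> (\<exists>!K. recurrent_class S P K)"
proof
  assume u: "\<exists>!K. recurrent_class S P K"
  have eq: "K1 = K2" if "recurrent_class S P K1" "recurrent_class S P K2" for K1 K2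
    using u that unfolding Ex1_def by blast
  have e: "{j \<in> S. communicates S P a j} = {j \<in> S. communicates S P b j}"
    by (rule eq[OF rec_class_of[OF a] rec_class_of[OF b]])
  have "a \<in> {j \<in> S. communicates S P a j}"
    using a by (simp add: recurrent_state_def communicates_def reaches_refl)
  then have "a \<in> {j \<in> S. communicates S P b j}" by (simp only: e)
  then show False using ba by (simp add: communicates_def)
qed

lemma unichain_sub:
  assumes fin: "finite S" and sub: "\<And>i j. chain_step S Q i j \<Longrightarrow> chain_step S P i j"
    and uni: "\<exists>!K. recurrent_class S Q K"
  shows "\<exists>r\<in>S. \<forall>i\<in>S. reaches S P i r"
proof (rule ccontr)
  assume nr: "\<not> (\<exists>r\<in>S. \<forall>i\<in>S. reaches S P i r)"
  have subm: "reaches S P i j" if "reaches S Q i j" for i j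
    using that unfolding reaches_def
    by (induction rule: rtranclp_induct) (auto intro: rtranclp.rtrancl_into_rtrancl sub)
  from uni obtain K where "recurrent_class S Q K" by blast
  then obtain i0 where i0: "i0 \<in> S" by (auto simp: recurrent_class_def comm_class_def)
  obtain a where a: "reaches S P i0 a" "recurrent_state S P a" using exists_rec[OF fin i0] by blast
  have aS: "a \<in> S" using a by (simp add: recurrent_state_def)
  then obtain i1 where i1: "i1 \<in> S" "\<not> reaches S P i1 a" using nr by blast
  obtain b where b: "reaches S P i1 b" "recurrent_state S P b" using exists_rec[OF fin i1(1)] by blast
  have bS: "b \<in> S" using b by (simp add: recurrent_state_def)
  obtain a' where a': "reaches S Q a a'" "recurrent_state S Q a'" using exists_rec[OF fin aS] by blast
  obtain b' where b': "reaches S Q b b'" "recurrent_state S Q b'" using exists_rec[OF fin bS] by blast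
  have "\<not> reaches S Q b' a'"
  proof
    assume "reaches S Q b' a'"
    then have 1: "reaches S P b' a'" by (rule subm)
    have 2: "reaches S P b b'" using b'(1) by (rule subm)
    have 3: "reaches S P a' a" using reaches_mono[OF sub a'(1)] a(2) by (auto simp: recurrent_state_def)
    have "reaches S P i1 a" using reaches_trans[OF b(1) reaches_trans[OF 2 reaches_trans[OF 1 3]]] .
    then show False using i1 by blast
  qed
  then show False using two_rec[OF a'(2) b'(2)] uni by blast
qed

theorem lemma2:
  fixes C :: nat
    and S :: "nat \<Rightarrow> 's set"
    and A :: "nat \<Rightarrow> 's \<Rightarrow> 'a set"
    and phi :: "nat \<Rightarrow> 's \<Rightarrow> 'a \<Rightarrow> 's \<Rightarrow> real"
    and lam :: "nat \<Rightarrow> real"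
  assumes finS: "\<And>c. c \<in> {1..C} \<Longrightarrow> finite (S c)"
    and finA: "\<And>c s. c \<in> {1..C} \<Longrightarrow> s \<in> S c \<Longrightarrow> finite (A c s) \<and> A c s \<noteq> {}"
    and kernel: "\<And>c s a. c \<in> {1..C} \<Longrightarrow> s \<in> S c \<Longrightarrow> a \<in> A c s \<Longrightarrow> pdist (S c) (phi c s a)"
    and rate: "\<And>c. c \<in> {1..C} \<Longrightarrow> lam c > 0"
    and unichain: "\<And>c u. c \<in> {1..C} \<Longrightarrow> det_policy (S c) (A c) u \<Longrightarrow>
         \<exists>!K. recurrent_class (S c) (pol_matrix (A c) (phi c) u) K"
  shows "\<forall>c\<in>{1..C}. \<forall>u. policy (S c) (A c) u \<longrightarrow>
           (\<exists>eta. stationary (S c) (generator (lam c) (pol_matrix (A c) (phi c) u)) eta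
              \<and> (\<forall>eta'. stationary (S c) (generator (lam c) (pol_matrix (A c) (phi c) u)) eta' \<longrightarrow> eta' = eta)
              \<and> (\<forall>p0. pdist (S c) p0 \<longrightarrow>
                   (\<forall>s\<in>S c. ((\<lambda>t. ctmc_dist (S c) (lam c) (pol_matrix (A c) (phi c) u) p0 t s)
                              \<longlongrightarrow> eta s) at_top)))"
proof (intro ballI allI impI)
  fix c u assume c: "c \<in> {1..C}" and pol: "policy (S c) (A c) u"
  define Pu where "Pu = pol_matrix (A c) (phi c) u"
  have ud: "pdist (A c s) (u s)" if "s \<in> S c" for s using pol that by (simp add: policy_def)
  have unn: "u s a \<ge> 0" if "s \<in> S c" "a \<in> A c s" for s a using ud[OF that(1)] that(2) by (simp add: pdist_def)
  have phinn: "phi c s a j \<ge> 0" if "s \<in> S c" "a \<in> A c s" "j \<in> S c" for s a j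
    using kernel[OF c that(1,2)] that(3) by (simp add: pdist_def)
  have ex: "\<exists>a. a \<in> A c s \<and> u s a > 0" if s: "s \<in> S c" for s
  proof (rule ccontr)
    assume "\<not> ?thesis"
    then have "\<forall>a\<in>A c s. u s a = 0" using unn[OF s] by force
    then have "sum (u s) (A c s) = 0" by simp
    then show False using ud[OF s] by (simp add: pdist_def)
  qed
  define ac where "ac s = (SOME a. a \<in> A c s \<and> u s a > 0)" for s
  have ac: "ac s \<in> A c s" "u s (ac s) > 0" if "s \<in> S c" for s
    using someI_ex[OF ex[OF that]] unfolding ac_def by blast+
  define d where "d s = (\<lambda>b. if b = ac s then (1::real) else 0)" for s
  have det: "det_policy (S c) (A c) d"
    unfolding det_policy_def policy_def
  proof (intro conjI ballI)
    fix s assume s: "s \<in> S c"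
    show "pdist (A c s) (d s)"
      using ac[OF s] finA[OF c s] by (auto simp: pdist_def d_def)
    show "\<exists>a\<in>A c s. d s = (\<lambda>b. if b = a then 1 else 0)" using ac[OF s] by (auto simp: d_def)
  qed
  define Pd where "Pd = pol_matrix (A c) (phi c) d"
  have Pd: "Pd j i = phi c i (ac i) j" if "i \<in> S c" for i j
    using ac[OF that] finA[OF c that]
    by (simp add: Pd_def pol_matrix_def d_def if_distrib[of "\<lambda>z. _ * z"] cong: if_cong)
  have sub: "chain_step (S c) Pd i j \<Longrightarrow> chain_step (S c) Pu i j" for i j
  proof -
    assume cs: "chain_step (S c) Pd i j"
    then have ij: "i \<in> S c" "j \<in> S c" and pos: "phi c i (ac i) j > 0"
      using Pd by (auto simp: chain_step_def)
    have "0 < phi c i (ac i) j * u i (ac i)" using pos ac[OF ij(1)] by simp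
    also have "\<dots> \<le> Pu j i" unfolding Pu_def pol_matrix_def
      by (rule member_le_sum[where f="\<lambda>a. phi c i a j * u i a", OF ac(1)[OF ij(1)]])
         (use ij phinn unn finA[OF c ij(1)] in auto)
    finally show ?thesis using ij by (simp add: chain_step_def)
  qed
  obtain r where r: "r \<in> S c" "\<And>i. i \<in> S c \<Longrightarrow> reaches (S c) Pu i r"
    using unichain_sub[OF finS[OF c] sub unichain[OF c det, folded Pd_def]] by blast
  interpret ctm_r "S c" Pu "lam c" r
  proof
    show "finite (S c)" by (rule finS[OF c])
    show "S c \<noteq> {}" using r by blast
    show "lam c > 0" by (rule rate[OF c])
    fix i j assume i: "i \<in> S c" and j: "j \<in> S c"
    show "Pu j i \<ge> 0" unfolding Pu_def pol_matrix_def
      by (intro sum_nonneg mult_nonneg_nonneg phinn unn i j)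
  next
    fix i assume i: "i \<in> S c"
    have "(\<Sum>j\<in>S c. Pu j i) = (\<Sum>a\<in>A c i. u i a * (\<Sum>j\<in>S c. phi c i a j))"
      unfolding Pu_def pol_matrix_def by (subst sum.swap) (simp add: sum_distrib_left mult.commute)
    also have "\<dots> = (\<Sum>a\<in>A c i. u i a)"
      using kernel[OF c i] by (intro sum.cong) (auto simp: pdist_def)
    also have "\<dots> = 1" using ud[OF i] by (simp add: pdist_def)
    finally show "(\<Sum>j\<in>S c. Pu j i) = 1" .
  next
    show "r \<in> S c" by (rule r(1))
    fix i assume "i \<in> S c" then show "reaches (S c) Pu i r" by (rule r(2))
  qed
  show "\<exists>eta. stationary (S c) (generator (lam c) (pol_matrix (A c) (phi c) u)) eta
              \<and> (\<forall>eta'. stationary (S c) (generator (lam c) (pol_matrix (A c) (phi c) u)) eta' \<longrightarrow> eta' = eta)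
              \<and> (\<forall>p0. pdist (S c) p0 \<longrightarrow>
                   (\<forall>s\<in>S c. ((\<lambda>t. ctmc_dist (S c) (lam c) (pol_matrix (A c) (phi c) u) p0 t s)
                              \<longlongrightarrow> eta s) at_top))"
    using main unfolding Pu_def .
qed

end
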